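(* For every sufficiently large positive integer $C$ the following holds. Let $l_n=(n+C)^3$ for $n\in\{0,1,2,\dots\}$, and let $G=(V,E)$ be the comb graph with vertex set $V=\{(n,l)\in\mathbb{N}_0\times\mathbb{N}_0:\ l\le l_n\}$ and edges $(n,0)\sim(n+1,0)$ and $(n,l)\sim(n,l+1)$ (for all admissible $n,l$). Let $f(n,0)=1/l_n$ and $f(n,l)=0$ for $0<l<l_n$. Define $v:V\to\mathbb{R}$ by $v(0,0)=l_0\sum_{k=0}^\infty \frac1{l_k}$, $v(n,0)=v(n-1,0)+\sum_{k=n}^\infty\frac1{l_k}$ for $n\ge1$, and $v(n,l)=\frac{l_n-l}{l_n}v(n,0)$. Then $v$ is a bounded solution of \[ \begin{cases}\Delta_\infty v(n,l)=-f(n,l), & l<l_n,\\ v(n,l)=0, & l=l_n.\end{cases} \]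
   Context: $\mathbb{N}_0=\{0,1,2,\dots\}$. The discrete infinity Laplacian of $w:V\to\mathbb{R}$ is $\Delta_\infty w(x)=\inf_{y\sim x}w(y)+\sup_{y\sim x}w(y)-2w(x)$, where $y\sim x$ means $\{x,y\}\in E$. *)

theory Defs
  imports Complex_Main
begin

definition inf_laplacian :: "('a \<Rightarrow> 'a \<Rightarrow> bool) \<Rightarrow> ('a \<Rightarrow> real) \<Rightarrow> 'a \<Rightarrow> real" where
  "inf_laplacian adj w x = Inf (w ` {y. adj x y}) + Sup (w ` {y. adj x y}) - 2 * w x"

definition comb_l :: "nat \<Rightarrow> nat \<Rightarrow> nat" where
  "comb_l C n = (n + C) ^ 3"

definition comb_V :: "(nat \<Rightarrow> nat) \<Rightarrow> (nat \<times> nat) set" where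
  "comb_V L = {(n, l). l \<le> L n}"

definition comb_adj :: "(nat \<Rightarrow> nat) \<Rightarrow> nat \<times> nat \<Rightarrow> nat \<times> nat \<Rightarrow> bool" where
  "comb_adj L x y \<longleftrightarrow> x \<in> comb_V L \<and> y \<in> comb_V L \<and>
     ((snd x = 0 \<and> snd y = 0 \<and> (fst y = fst x + 1 \<or> fst x = fst y + 1)) \<or>
      (fst x = fst y \<and> (snd y = snd x + 1 \<or> snd x = snd y + 1)))"

definition comb_f :: "(nat \<Rightarrow> nat) \<Rightarrow> nat \<times> nat \<Rightarrow> real" where
  "comb_f L x = (if snd x = 0 then 1 / real (L (fst x)) else 0)"

end

theory Submission imports Defs "HOL-Analysis.Analysis" begin

lemma ser_summable: "summable (\<lambda>k. 1 / real ((k + m) ^ 3))"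
proof -
  have h: "summable (\<lambda>k. inverse (real k ^ 3))" by (rule inverse_power_summable) simp
  then have "summable (\<lambda>k. inverse (real (k + m) ^ 3))"
    using summable_ignore_initial_segment[OF h, of m] by simp
  then show ?thesis by (simp add: divide_inverse)
qed

lemma lim0: assumes m: "m \<ge> 2" and c: "c \<ge> (1::real)"
  shows "(\<lambda>k. 1 / (c * (real (k + m) - 1) * real (k + m))) \<longlonglongrightarrow> 0"
proof (rule tendsto_sandwich[of "\<lambda>_. 0" _ _ "\<lambda>n. inverse (real (Suc n))"])
  show "\<forall>\<^sub>F n in sequentially. 0 \<le> 1 / (c * (real (n + m) - 1) * real (n + m))"
    using m c by (intro always_eventually allI) simp
  show "\<forall>\<^sub>F n in sequentially. 1 / (c * (real (n + m) - 1) * real (n + m)) \<le> inverse (real (Suc n))"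
  proof (intro always_eventually allI)
    fix n
    have "real (Suc n) \<le> 1 * 1 * real (n + m)" using m by simp
    also have "\<dots> \<le> c * (real (n + m) - 1) * real (n + m)"
      using m c by (intro mult_right_mono mult_mono) auto
    finally show "1 / (c * (real (n + m) - 1) * real (n + m)) \<le> inverse (real (Suc n))"
      unfolding inverse_eq_divide by (intro divide_left_mono) auto
  qed
qed (simp_all only: LIMSEQ_inverse_real_of_nat tendsto_const)

lemma ser_lower:
  assumes m: "m \<ge> 2"
  shows "1 / (3 * (real m - 1) * real m) \<le> (\<Sum>k. 1 / real ((k + m) ^ 3))"
proof -
  define g where "g k = 1 / (3 * (real (k + m) - 1) * real (k + m))" for k
  have "g \<longlonglongrightarrow> 0" unfolding g_def using lim0[OF m, of 3] by simp
  then have s: "(\<lambda>k. g k - g (Suc k)) sums (g 0 - 0)" by (rule telescope_sums')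
  have le: "g k - g (Suc k) \<le> 1 / real ((k + m) ^ 3)" for k
  proof -
    define x where "x = real (k + m)"
    have x: "x \<ge> 2" using m unfolding x_def by simp
    have e: "g k = 1 / (3 * (x - 1) * x)" "g (Suc k) = 1 / (3 * x * (x + 1))"
      unfolding g_def x_def by (simp_all add: algebra_simps)
    have "g k - g (Suc k) = 2 / (3 * (x - 1) * x * (x + 1))"
      unfolding e using x
      apply (subgoal_tac "x - 1 \<noteq> 0" "x + 1 \<noteq> 0" "x \<noteq> 0")
      apply (simp add: divide_simps) apply (simp add: algebra_simps)
      by auto
    also have "\<dots> \<le> 1 / x ^ 3"
    proof -
      have p: "0 < (x-1)*x*(x+1)" using x by simp
      have "x^2 \<ge> 2^2" using x by (intro power_mono) auto
      then have "x*(x^2-3) \<ge> 0" using x by simp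
      then have "2*x^3 \<le> 3*((x-1)*x*(x+1))" by (simp add: algebra_simps power2_eq_square power3_eq_cube)
      then show ?thesis using p x by (simp add: divide_simps mult.assoc) (simp add: algebra_simps)
    qed
    finally show ?thesis by (simp add: x_def)
  qed
  have "g 0 - 0 \<le> (\<Sum>k. 1 / real ((k + m) ^ 3))"
    by (rule sums_le[OF le s summable_sums[OF ser_summable]])
  then show ?thesis by (simp add: g_def)
qed

lemma ser_upper:
  assumes m: "m \<ge> 2"
  shows "(\<Sum>k. 1 / real ((k + m) ^ 3)) \<le> 1 / (2 * (real m - 1) * real m)"
proof -
  define g where "g k = 1 / (2 * (real (k + m) - 1) * real (k + m))" for k
  have "g \<longlonglongrightarrow> 0" unfolding g_def using lim0[OF m, of 2] by simp
  then have s: "(\<lambda>k. g k - g (Suc k)) sums (g 0 - 0)" by (rule telescope_sums')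
  have le: "1 / real ((k + m) ^ 3) \<le> g k - g (Suc k)" for k
  proof -
    define x where "x = real (k + m)"
    have x: "x \<ge> 2" using m unfolding x_def by simp
    have e: "g k = 1 / (2 * (x - 1) * x)" "g (Suc k) = 1 / (2 * x * (x + 1))"
      unfolding g_def x_def by (simp_all add: algebra_simps)
    have "g k - g (Suc k) = 1 / ((x - 1) * x * (x + 1))"
      unfolding e using x
      apply (subgoal_tac "x - 1 \<noteq> 0" "x + 1 \<noteq> 0" "x \<noteq> 0")
      apply (simp add: divide_simps) apply (simp add: algebra_simps)
      by auto
    moreover have "1 / x ^ 3 \<le> 1 / ((x - 1) * x * (x + 1))"
    proof -
      have p: "0 < (x-1)*x*(x+1)" using x by simp
      have "(x-1)*x*(x+1) \<le> x^3" using x by (simp add: algebra_simps power3_eq_cube)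
      then show ?thesis using p x by (simp add: divide_simps)
    qed
    ultimately show ?thesis by (simp add: x_def)
  qed
  have "(\<Sum>k. 1 / real ((k + m) ^ 3)) \<le> g 0 - 0"
    by (rule sums_le[OF le summable_sums[OF ser_summable] s])
  then show ?thesis by (simp add: g_def)
qed

lemma Inf2: "Inf {a::real, b} = min a b" by (simp add: cInf_insert inf_real_def)
lemma Sup2: "Sup {a::real, b} = max a b" by (simp add: cSup_insert sup_real_def)
lemma Inf3: "Inf {a::real, b, c} = min a (min b c)" by (simp add: cInf_insert inf_real_def)
lemma Sup3: "Sup {a::real, b, c} = max a (max b c)" by (simp add: cSup_insert sup_real_def)

lemma N1: assumes "l \<noteq> 0" "l < L n"
  shows "{y. comb_adj L (n, l) y} = {(n, l - 1), (n, l + 1)}"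
  using assms unfolding comb_adj_def comb_V_def by auto
lemma N2: assumes "1 \<le> L 0"
  shows "{y. comb_adj L (0, 0) y} = {(1, 0), (0, 1)}"
  using assms unfolding comb_adj_def comb_V_def by auto
lemma N3: assumes "1 \<le> L (Suc m)"
  shows "{y. comb_adj L (Suc m, 0) y} = {(m, 0), (Suc (Suc m), 0), (Suc m, 1)}"
  using assms unfolding comb_adj_def comb_V_def by auto

lemma min_max_sum: "min (a::real) b + max a b = a + b" by (simp add: min_def max_def)

theorem proposition4p5:
  shows "\<exists>C0::nat. \<forall>C::nat. C \<ge> C0 \<and> C > 0 \<longrightarrow>
    (\<forall>v :: nat \<times> nat \<Rightarrow> real.
       v (0, 0) = real (comb_l C 0) * (\<Sum>k. 1 / real (comb_l C k)) \<and>
       (\<forall>n\<ge>1. v (n, 0) = v (n - 1, 0) + (\<Sum>k. 1 / real (comb_l C (k + n)))) \<and>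
       (\<forall>n l. l \<le> comb_l C n \<longrightarrow>
          v (n, l) = (real (comb_l C n) - real l) / real (comb_l C n) * v (n, 0))
       \<longrightarrow>
       (\<exists>M. \<forall>x \<in> comb_V (comb_l C). \<bar>v x\<bar> \<le> M) \<and>
       (\<forall>n l. (n, l) \<in> comb_V (comb_l C) \<and> l < comb_l C n \<longrightarrow>
          inf_laplacian (comb_adj (comb_l C)) v (n, l) = - comb_f (comb_l C) (n, l)) \<and>
       (\<forall>n l. (n, l) \<in> comb_V (comb_l C) \<and> l = comb_l C n \<longrightarrow> v (n, l) = 0))"
proof (intro exI[of _ 2] allI impI, elim conjE)
  fix C :: nat and v :: "nat \<times> nat \<Rightarrow> real"
  assume C: "2 \<le> C" "0 < C"
  assume H0: "v (0, 0) = real (comb_l C 0) * (\<Sum>k. 1 / real (comb_l C k))"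
    and H1: "\<forall>n\<ge>1. v (n, 0) = v (n - 1, 0) + (\<Sum>k. 1 / real (comb_l C (k + n)))"
    and H2: "\<forall>n l. l \<le> comb_l C n \<longrightarrow>
          v (n, l) = (real (comb_l C n) - real l) / real (comb_l C n) * v (n, 0)"
  define L where "L n = real (comb_l C n)" for n
  define s where "s n = (\<Sum>k. 1 / real (comb_l C (k + n)))" for n
  have L_eq: "L n = real (n + C) ^ 3" for n unfolding L_def comb_l_def by simp
  have Lpos: "L n > 0" for n using C unfolding L_eq by simp
  have Lge: "L n \<ge> 8" for n
  proof -
    have "real (n + C) \<ge> 2" using C by simp
    then have "real (n + C) ^ 3 \<ge> 2 ^ 3" by (intro power_mono) auto
    then show ?thesis unfolding L_eq by simp
  qed
  have s_eq: "s n = (\<Sum>k. 1 / real ((k + (n + C)) ^ 3))" for n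
    unfolding s_def comb_l_def by (simp add: add.assoc)
  have s_summ: "summable (\<lambda>k. 1 / real (comb_l C (k + n)))" for n
    using ser_summable[of "n + C"] unfolding comb_l_def by (simp add: add.assoc)
  have s_split: "s n = 1 / L n + s (Suc n)" for n
  proof -
    have "(\<Sum>k. 1 / real (comb_l C (Suc k + n))) = s n - 1 / real (comb_l C (0 + n))"
      unfolding s_def by (rule suminf_split_head[OF s_summ])
    then show ?thesis unfolding s_def L_def by simp
  qed
  have s_lo: "1 / (3 * (real (n + C) - 1) * real (n + C)) \<le> s n" for n
    unfolding s_eq using ser_lower[of "n + C"] C by simp
  have s_hi: "s n \<le> 1 / (2 * (real (n + C) - 1) * real (n + C))" for n
    unfolding s_eq using ser_upper[of "n + C"] C by simp
  have s_pos: "s n > 0" for n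
  proof -
    have "real (n + C) \<ge> 2" using C by simp
    then have "0 < 1 / (3 * (real (n + C) - 1) * real (n + C))" by simp
    then show ?thesis using s_lo[of n] by linarith
  qed
  have v0: "v (0, 0) = L 0 * s 0" using H0 unfolding L_def s_def by simp
  have vrec: "v (Suc n, 0) = v (n, 0) + s (Suc n)" for n
    using H1[rule_format, of "Suc n"] unfolding s_def by simp
  have vl: "l \<le> comb_l C n \<Longrightarrow> v (n, l) = (L n - real l) / L n * v (n, 0)" for n l
    unfolding L_def by (rule H2[rule_format])
  have vpos: "v (n, 0) \<ge> 0" for n
  proof (induction n)
    case 0 then show ?case using v0 Lpos[of 0] s_pos[of 0] by simp
  next
    case (Suc n) then show ?case using vrec[of n] s_pos[of "Suc n"] by simp
  qed
  have key: "v (n, 0) \<le> L n * s n" for n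
  proof (induction n)
    case 0 then show ?case using v0 by simp
  next
    case (Suc n)
    define x where "x = real (Suc n + C)"
    have x: "x \<ge> 3" using C unfolding x_def by simp
    have LS: "L (Suc n) = x ^ 3" "L n = (x - 1) ^ 3" unfolding L_eq x_def by simp_all
    have "1 / (3 * (x - 1) * x) \<le> s (Suc n)" using s_lo[of "Suc n"] unfolding x_def by simp
    then have "1 \<le> 3 * (x - 1) * x * s (Suc n)" using x by (simp add: divide_simps mult.assoc) (simp add: algebra_simps)
    also have "3 * (x - 1) * x = L (Suc n) - L n - 1" unfolding LS by (simp add: algebra_simps power3_eq_cube)
    finally have A: "1 \<le> (L (Suc n) - L n - 1) * s (Suc n)" .
    have "v (Suc n, 0) = v (n, 0) + s (Suc n)" by (rule vrec)
    also have "\<dots> \<le> L n * s n + s (Suc n)" using Suc by simp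
    also have "L n * s n = 1 + L n * s (Suc n)" using s_split[of n] Lpos[of n] by (simp add: algebra_simps)
    finally show ?case using A by (simp add: algebra_simps)
  qed
  have vbound: "v (n, 0) \<le> v (0, 0) + 1 / (2 * real C) - 1 / (2 * real (n + C))" for n
  proof (induction n)
    case 0 then show ?case by simp
  next
    case (Suc n)
    define x where "x = real (Suc n + C)"
    have x: "x \<ge> 3" using C unfolding x_def by simp
    have "s (Suc n) \<le> 1 / (2 * (x - 1) * x)" using s_hi[of "Suc n"] unfolding x_def by simp
    also have "\<dots> = 1 / (2 * (x - 1)) - 1 / (2 * x)" using x
      apply (subgoal_tac "x - 1 \<noteq> 0" "x \<noteq> 0")
      apply (simp add: divide_simps) apply (simp add: algebra_simps)
      by auto
    also have "x - 1 = real (n + C)" unfolding x_def by simp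
    finally have "s (Suc n) \<le> 1 / (2 * real (n + C)) - 1 / (2 * x)" .
    then show ?case using Suc vrec[of n] unfolding x_def by simp
  qed
  have vub: "v (n, 0) \<le> v (0, 0) + 1" for n
  proof -
    have "1 / (2 * real C) \<le> 1" using C by simp
    moreover have "0 \<le> 1 / (2 * real (n + C))" by simp
    ultimately show ?thesis using vbound[of n] by linarith
  qed
  show "(\<exists>M. \<forall>x \<in> comb_V (comb_l C). \<bar>v x\<bar> \<le> M) \<and>
       (\<forall>n l. (n, l) \<in> comb_V (comb_l C) \<and> l < comb_l C n \<longrightarrow>
          inf_laplacian (comb_adj (comb_l C)) v (n, l) = - comb_f (comb_l C) (n, l)) \<and>
       (\<forall>n l. (n, l) \<in> comb_V (comb_l C) \<and> l = comb_l C n \<longrightarrow> v (n, l) = 0)"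
  proof (intro conjI)
    show "\<exists>M. \<forall>x \<in> comb_V (comb_l C). \<bar>v x\<bar> \<le> M"
    proof (intro exI ballI)
      fix x assume "x \<in> comb_V (comb_l C)"
      then obtain n l where xe: "x = (n, l)" and l: "l \<le> comb_l C n" unfolding comb_V_def by auto
      have lL: "real l \<le> L n" using l unfolding L_def by simp
      have f0: "0 \<le> (L n - real l) / L n" "(L n - real l) / L n \<le> 1"
        using lL Lpos[of n] by (simp_all add: divide_simps)
      have "\<bar>v x\<bar> = (L n - real l) / L n * v (n, 0)"
      proof -
        have "0 \<le> (L n - real l) / L n * v (n, 0)" using f0(1) vpos[of n] by (rule mult_nonneg_nonneg)
        then show ?thesis unfolding xe vl[OF l] by (rule abs_of_nonneg)
      qed
      also have "\<dots> \<le> 1 * v (n, 0)" using f0 vpos[of n] by (intro mult_right_mono) auto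
      also have "\<dots> \<le> v (0, 0) + 1" using vub[of n] by simp
      finally show "\<bar>v x\<bar> \<le> v (0, 0) + 1" .
    qed
  next
    show "\<forall>n l. (n, l) \<in> comb_V (comb_l C) \<and> l = comb_l C n \<longrightarrow> v (n, l) = 0"
    proof (intro allI impI, elim conjE)
      fix n l assume "l = comb_l C n"
      then show "v (n, l) = 0" using vl[of l n] by (simp add: L_def)
    qed
  next
    show "\<forall>n l. (n, l) \<in> comb_V (comb_l C) \<and> l < comb_l C n \<longrightarrow>
          inf_laplacian (comb_adj (comb_l C)) v (n, l) = - comb_f (comb_l C) (n, l)"
    proof (intro allI impI, elim conjE)
      fix n l assume "(n, l) \<in> comb_V (comb_l C)" and lt: "l < comb_l C n"
      show "inf_laplacian (comb_adj (comb_l C)) v (n, l) = - comb_f (comb_l C) (n, l)"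
      proof (cases "l = 0")
        case False
        have N: "{y. comb_adj (comb_l C) (n, l) y} = {(n, l - 1), (n, l + 1)}"
          by (rule N1[of l "comb_l C" n, OF False lt])
        have a: "v (n, l - 1) = (L n - real l + 1) / L n * v (n, 0)"
          using vl[of "l - 1" n] lt False by (simp add: of_nat_diff)
        have b: "v (n, l + 1) = (L n - real l - 1) / L n * v (n, 0)"
          using vl[of "l + 1" n] lt by simp
        have c: "v (n, l) = (L n - real l) / L n * v (n, 0)"
          using vl[of l n] lt by simp
        have "inf_laplacian (comb_adj (comb_l C)) v (n, l) = v (n, l - 1) + v (n, l + 1) - 2 * v (n, l)"
          unfolding inf_laplacian_def N by (simp add: Inf2 Sup2 min_max_sum)
        also have "\<dots> = 0" unfolding a b c by (simp add: divide_simps algebra_simps)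
        finally show ?thesis using False unfolding comb_f_def by simp
      next
        case True
        have L1: "1 \<le> comb_l C n" using lt True by simp
        have v1: "v (n, 1) = v (n, 0) - v (n, 0) / L n"
          using vl[OF L1] Lpos[of n] by (simp add: divide_simps algebra_simps)
        show ?thesis
        proof (cases n)
          case 0
          have N: "{y. comb_adj (comb_l C) (n, l) y} = {(1, 0), (0, 1)}"
            using N2[of "comb_l C"] L1 True 0 by simp
          have "v (0, 1) = v (0, 0) - s 0" using v1 v0 Lpos[of 0] 0 by simp
          then have "inf_laplacian (comb_adj (comb_l C)) v (n, l) = v (1, 0) + v (0, 1) - 2 * v (0, 0)"
            unfolding inf_laplacian_def N using True 0
            by (simp add: Inf2 Sup2 min_max_sum)
          also have "\<dots> = s 1 - s 0" using vrec[of 0] \<open>v (0, 1) = v (0, 0) - s 0\<close> by simp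
          also have "\<dots> = - 1 / L 0" using s_split[of 0] by simp
          finally show ?thesis using True 0 unfolding comb_f_def L_def by simp
        next
          case (Suc m)
          have N: "{y. comb_adj (comb_l C) (n, l) y} = {(m, 0), (Suc n, 0), (n, 1)}"
            using N3[of "comb_l C" m] L1 True Suc by simp
          have a: "v (m, 0) = v (n, 0) - s n" using vrec[of m] Suc by simp
          have b: "v (Suc n, 0) = v (n, 0) + s (Suc n)" by (rule vrec)
          have ac: "v (n, 0) - s n \<le> v (n, 0) - v (n, 0) / L n"
            using key[of n] Lpos[of n] by (simp add: divide_simps mult.commute) (simp add: algebra_simps)
          have cb: "v (n, 0) - v (n, 0) / L n \<le> v (n, 0) + s (Suc n)"
            using vpos[of n] Lpos[of n] s_pos[of "Suc n"] by (smt (verit) divide_nonneg_pos)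
          have "inf_laplacian (comb_adj (comb_l C)) v (n, l) = v (m, 0) + v (Suc n, 0) - 2 * v (n, 0)"
            unfolding inf_laplacian_def N using True a b v1 ac cb
            by (simp add: Inf3 Sup3 min_def max_def)
          also have "\<dots> = s (Suc n) - s n" using a b by simp
          also have "\<dots> = - 1 / L n" using s_split[of n] by simp
          finally show ?thesis using True unfolding comb_f_def L_def by simp
        qed
      qed
    qed
  qed
qed

end
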